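(* Let $G$ be a compact abelian group with Haar probability $m_G$, $d$ a translation-invariant metric on $G$, and $T_gx=x+g$ an ergodic rotation. The graph joinings $\lambda_h=(x\mapsto(x,x+h))_\#m_G$, $h\in G$, all lie in one coordinate-isomorphism class, and $\Phi_{n,m}(\lambda_h)=\Phi_{n,m}(\lambda_{h'})$ for all $h,h'\in G$ and all $n,m\ge1$. Moreover, if $d(X_1,X_2)$ is non-degenerate (not a.s. constant) for independent Haar-distributed $X_1,X_2$, then $\Phi_{2,1}(\lambda_h)\ne\Phi_{2,1}(m_G\otimes m_G)$.
   Context: For $z_i=(x_i,y_i)\in G\times G$, $\mathcal D^X_{n,m}=(d(T_g^ax_i,T_g^bx_j))_{1\le i,j\le n,0\le a,b<m}$, $\mathcal D^Y_{n,m}=(d(T_g^ay_i,T_g^by_j))_{1\le i,j\le n,0\le a,b<m}$, $\Phi_{n,m}(\lambda)=\mathrm{Law}_{\lambda^{\otimes n}}(\mathcal D^X_{n,m},\mathcal D^Y_{n,m})$. $\mathrm{Aut}_{\rm md}$ of $(G,d,m_G,T_g)$ is the group of measure-space automorphisms $A$ of $(G,m_G)$ commuting with $T_g$ modulo null sets and with $d(Ax,Ax')=d(x,x')$ for $m_G\otimes m_G$-a.e. $(x,x')$. Two self-joinings $\lambda,\lambda'$ are coordinate-isomorphic if $\lambda'=(A\times B)_\#\lambda$ for some $A,B\in\mathrm{Aut}_{\rm md}$. *)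

theory Defs
  imports "HOL-Probability.Probability"
begin

definition is_metric :: "('a \<Rightarrow> 'a \<Rightarrow> real) \<Rightarrow> bool" where
  "is_metric d \<longleftrightarrow> (\<forall>x y. d x y = 0 \<longleftrightarrow> x = y) \<and> (\<forall>x y. d x y = d y x)
     \<and> (\<forall>x y z. d x z \<le> d x y + d y z)"

definition translation_invariant :: "('a::ab_group_add \<Rightarrow> 'a \<Rightarrow> real) \<Rightarrow> bool" where
  "translation_invariant d \<longleftrightarrow> (\<forall>x y g. d (x + g) (y + g) = d x y)"

definition compact_ab_topgroup :: "'a::{ab_group_add,t2_space} itself \<Rightarrow> bool" where
  "compact_ab_topgroup TYPE('a) \<longleftrightarrow> compact (UNIV :: 'a set)
     \<and> continuous_on UNIV (\<lambda>p::'a \<times> 'a. fst p + snd p)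
     \<and> continuous_on UNIV (uminus :: 'a \<Rightarrow> 'a)"

definition haar_probability :: "'a::{ab_group_add,topological_space} measure \<Rightarrow> bool" where
  "haar_probability M \<longleftrightarrow> sets M = sets borel \<and> prob_space M
     \<and> (\<forall>g. distr M M (\<lambda>x. x + g) = M)"

definition ergodic_map :: "'a measure \<Rightarrow> ('a \<Rightarrow> 'a) \<Rightarrow> bool" where
  "ergodic_map M T \<longleftrightarrow> T \<in> M \<rightarrow>\<^sub>M M \<and> distr M M T = M \<and>
     (\<forall>A \<in> sets M. T -` A \<inter> space M = A \<longrightarrow> emeasure M A = 0 \<or> emeasure M A = 1)"

definition rot :: "'a::ab_group_add \<Rightarrow> 'a \<Rightarrow> 'a" where
  "rot g x = x + g"

definition graph_joining :: "'a::ab_group_add measure \<Rightarrow> 'a \<Rightarrow> ('a \<times> 'a) measure" where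
  "graph_joining M h = distr M (M \<Otimes>\<^sub>M M) (\<lambda>x. (x, x + h))"

definition Aut_md :: "'a measure \<Rightarrow> ('a \<Rightarrow> 'a \<Rightarrow> real) \<Rightarrow> ('a \<Rightarrow> 'a) \<Rightarrow> ('a \<Rightarrow> 'a) set" where
  "Aut_md M d T = {A. A \<in> M \<rightarrow>\<^sub>M M \<and> distr M M A = M
     \<and> (\<exists>B \<in> M \<rightarrow>\<^sub>M M. (AE x in M. B (A x) = x) \<and> (AE x in M. A (B x) = x))
     \<and> (AE x in M. A (T x) = T (A x))
     \<and> (AE p in M \<Otimes>\<^sub>M M. d (A (fst p)) (A (snd p)) = d (fst p) (snd p))}"

definition coord_isomorphic ::
  "'a measure \<Rightarrow> ('a \<Rightarrow> 'a \<Rightarrow> real) \<Rightarrow> ('a \<Rightarrow> 'a) \<Rightarrow> ('a \<times> 'a) measure \<Rightarrow> ('a \<times> 'a) measure \<Rightarrow> bool" where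
  "coord_isomorphic M d T L L' \<longleftrightarrow>
     (\<exists>A \<in> Aut_md M d T. \<exists>B \<in> Aut_md M d T. L' = distr L (M \<Otimes>\<^sub>M M) (\<lambda>(x, y). (A x, B y)))"

definition idx :: "nat \<Rightarrow> nat \<Rightarrow> ((nat \<times> nat) \<times> (nat \<times> nat)) set" where
  "idx n m = ({1..n} \<times> {..<m}) \<times> ({1..n} \<times> {..<m})"

definition Dmat :: "('a \<Rightarrow> 'a \<Rightarrow> real) \<Rightarrow> ('a \<Rightarrow> 'a) \<Rightarrow> nat \<Rightarrow> nat \<Rightarrow> (nat \<Rightarrow> 'a)
    \<Rightarrow> ((nat \<times> nat) \<times> (nat \<times> nat) \<Rightarrow> real)" where
  "Dmat d T n m x = restrict (\<lambda>((i, a), (j, b)). d ((T ^^ a) (x i)) ((T ^^ b) (x j))) (idx n m)"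

definition Phi :: "('a \<Rightarrow> 'a \<Rightarrow> real) \<Rightarrow> ('a \<Rightarrow> 'a) \<Rightarrow> nat \<Rightarrow> nat \<Rightarrow> ('a \<times> 'a) measure
    \<Rightarrow> (((nat \<times> nat) \<times> (nat \<times> nat) \<Rightarrow> real) \<times> ((nat \<times> nat) \<times> (nat \<times> nat) \<Rightarrow> real)) measure" where
  "Phi d T n m L = distr (PiM {1..n} (\<lambda>_. L))
     (PiM (idx n m) (\<lambda>_. borel) \<Otimes>\<^sub>M PiM (idx n m) (\<lambda>_. borel))
     (\<lambda>z. (Dmat d T n m (\<lambda>i. fst (z i)), Dmat d T n m (\<lambda>i. snd (z i))))"

end

theory Submission
  imports Defs "HOL-Probability.Probability"
begin

locale setting =
  fixes M :: "'a::{ab_group_add,t2_space} measure" and d :: "'a \<Rightarrow> 'a \<Rightarrow> real" and g :: 'a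
  assumes sets_M: "sets M = sets borel"
    and prob: "prob_space M"
    and haar: "\<And>t. distr M M (\<lambda>x. x + t) = M"
    and trans_meas: "\<And>t. (\<lambda>x. x + t) \<in> M \<rightarrow>\<^sub>M M"
    and tinv: "\<And>x y t. d (x + t) (y + t) = d x y"
    and dd: "(\<lambda>p. d (fst p) (snd p)) \<in> borel_measurable (M \<Otimes>\<^sub>M M)"
begin

lemma space_M: "space M = UNIV"
  using sets_eq_imp_space_eq[OF sets_M] by simp

lemma rot_meas[measurable]: "rot g \<in> M \<rightarrow>\<^sub>M M"
  unfolding rot_def[abs_def] by (rule trans_meas)

lemma d_meas:
  assumes "f \<in> N \<rightarrow>\<^sub>M M" "h \<in> N \<rightarrow>\<^sub>M M"
  shows "(\<lambda>z. d (f z) (h z)) \<in> borel_measurable N"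
  using measurable_compose[OF measurable_Pair[OF assms] dd] by simp

lemma rot_pow_add: "(rot g ^^ a) (y + c) = (rot g ^^ a) y + c"
  by (induction a) (auto simp: rot_def algebra_simps)

lemma ps_pair: "prob_space (M \<Otimes>\<^sub>M M)"
  using prob by (simp add: prob_space_pair)


lemma Dmat_alt: "Dmat d (rot g) n m x = (\<lambda>k\<in>idx n m. d ((rot g ^^ snd (fst k)) (x (fst (fst k)))) ((rot g ^^ snd (snd k)) (x (fst (snd k)))))"
  unfolding Dmat_def by (intro restrict_ext) auto

lemma Dmat_cong: "(\<And>i. i \<in> {1..n} \<Longrightarrow> x i = y i) \<Longrightarrow> Dmat d (rot g) n m x = Dmat d (rot g) n m y"
  unfolding Dmat_alt by (intro restrict_ext) (auto simp: idx_def)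

lemma Dmat_meas:
  assumes "\<And>i. i \<in> {1..n} \<Longrightarrow> (\<lambda>z. x z i) \<in> N \<rightarrow>\<^sub>M M"
  shows "(\<lambda>z. Dmat d (rot g) n m (x z)) \<in> N \<rightarrow>\<^sub>M PiM (idx n m) (\<lambda>_. borel)"
  unfolding Dmat_alt
proof (rule measurable_restrict)
  fix k assume k: "k \<in> idx n m"
  then have i: "fst (fst k) \<in> {1..n}" and j: "fst (snd k) \<in> {1..n}" by (auto simp: idx_def)
  show "(\<lambda>z. d ((rot g ^^ snd (fst k)) (x z (fst (fst k)))) ((rot g ^^ snd (snd k)) (x z (fst (snd k))))) \<in> borel_measurable N"
    by (intro d_meas measurable_compose[OF assms measurable_compose_n[OF rot_meas]] i j)
qed

lemma F_meas:
  "(\<lambda>z. (Dmat d (rot g) n m (\<lambda>i. fst (z i)), Dmat d (rot g) n m (\<lambda>i. snd (z i))))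
     \<in> PiM {1..n} (\<lambda>_. M \<Otimes>\<^sub>M M) \<rightarrow>\<^sub>M (PiM (idx n m) (\<lambda>_. borel) \<Otimes>\<^sub>M PiM (idx n m) (\<lambda>_. borel))"
  by (intro measurable_Pair Dmat_meas measurable_compose[OF measurable_component_singleton] measurable_fst'' measurable_snd'') auto

lemma graph_meas: "(\<lambda>x. (x, x + h)) \<in> M \<rightarrow>\<^sub>M M \<Otimes>\<^sub>M M"
  by (intro measurable_Pair measurable_ident_sets trans_meas) auto

lemma PiM_graph:
  "PiM {1..(n::nat)} (\<lambda>_. graph_joining M h) = distr (PiM {1..n} (\<lambda>_. M)) (PiM {1..n} (\<lambda>_. M \<Otimes>\<^sub>M M)) (compose {1..n} (\<lambda>x. (x, x + h)))"
  unfolding graph_joining_def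
  by (rule distr_PiM_finite_prob_space'[symmetric]) (auto simp: prob ps_pair graph_meas)



lemma Dmat_shift: "Dmat d (rot g) n m (\<lambda>i. x i + h) = Dmat d (rot g) n m x"
  unfolding Dmat_alt by (intro restrict_ext) (simp add: rot_pow_add tinv)

lemma Phi_graph:
  "Phi d (rot g) n m (graph_joining M h) = distr (PiM {1..n} (\<lambda>_. M)) (PiM (idx n m) (\<lambda>_. borel) \<Otimes>\<^sub>M PiM (idx n m) (\<lambda>_. borel))
      (\<lambda>x. (Dmat d (rot g) n m x, Dmat d (rot g) n m x))"
proof -
  have cm: "compose {1..n} (\<lambda>x. (x, x + h)) \<in> PiM {1..n} (\<lambda>_. M) \<rightarrow>\<^sub>M PiM {1..n} (\<lambda>_. M \<Otimes>\<^sub>M M)"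
    unfolding compose_def by (intro measurable_restrict measurable_compose[OF _ graph_meas] measurable_component_singleton) auto
  show ?thesis
    unfolding Phi_def PiM_graph
    apply (subst distr_distr[OF F_meas cm])
    apply (rule distr_cong)
      apply simp apply simp
    apply (simp add: compose_def)
    apply (intro conjI)
     apply (rule Dmat_cong, simp)
    apply (rule trans[OF _ Dmat_shift[of _ _ _ h]])
    apply (rule Dmat_cong, simp)
    done
qed


lemma AE_exists: assumes "prob_space N" "AE x in N. P x" shows "\<exists>x. P x"
proof (rule ccontr)
  assume "\<not> (\<exists>x. P x)"
  with assms(2) have "AE x in N. False" by (auto elim: AE_mp)
  with prob_space.AE_False[OF assms(1)] show False by simp
qed

lemma pMM: "pair_sigma_finite M M"
  using prob by (simp add: pair_sigma_finite_def prob_space_imp_sigma_finite)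

lemma const_from_one:
  assumes ae: "AE y in M. d b y = c"
  shows "AE p in M \<Otimes>\<^sub>M M. d (fst p) (snd p) = c"
proof -
  interpret P: pair_prob_space M M using prob by (simp add: pair_prob_space_def pair_sigma_finite_def prob_space_imp_sigma_finite)
  have all: "AE y in M. d x' y = c" for x'
  proof -
    have "AE y in distr M M (\<lambda>y. y + (b - x')). d b y = c" unfolding haar[of "b - x'"] by (rule ae)
    then have "AE y in M. d b (y + (b - x')) = c" by (rule AE_distrD[OF trans_meas])
    moreover have "d b (y + (b - x')) = d x' y" for y
      using tinv[of x' "b - x'" y] by simp
    ultimately show ?thesis by simp
  qed
  show ?thesis
  proof (rule P.AE_pair_measure)
    show "{x \<in> space (M \<Otimes>\<^sub>M M). d (fst x) (snd x) = c} \<in> sets (M \<Otimes>\<^sub>M M)"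
      using dd by measurable
    show "AE x in M. AE y in M. d (fst (x, y)) (snd (x, y)) = c" using all by simp
  qed
qed

lemma nondeg:
  assumes nd: "\<not> (\<exists>c. AE p in M \<Otimes>\<^sub>M M. d (fst p) (snd p) = c)"
  shows "\<not> (AE z in PiM {1..2::nat} (\<lambda>_. M \<Otimes>\<^sub>M M). d (fst (z 1)) (fst (z 2)) = d (snd (z 1)) (snd (z 2)))"
proof
  define L where "L = M \<Otimes>\<^sub>M M"
  have pL: "prob_space L" unfolding L_def by (rule ps_pair)
  have pL2: "prob_space (PiM {2::nat} (\<lambda>_. L))" using pL by (intro prob_space_PiM) auto
  interpret P: pair_prob_space L "PiM {2::nat} (\<lambda>_. L)" using pL pL2 by (simp add: pair_prob_space_def pair_sigma_finite_def prob_space_imp_sigma_finite)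
  have I: "{1..2::nat} = insert 1 {2}" by auto
  have eq: "distr (L \<Otimes>\<^sub>M (\<Pi>\<^sub>M i\<in>{2::nat}. L)) (\<Pi>\<^sub>M i\<in>{1..2}. L) (\<lambda>(x, X). X(1 := x)) = (\<Pi>\<^sub>M i\<in>{1..2}. L)"
    unfolding I by (rule distr_pair_PiM_eq_PiM) (use pL in auto)
  have mf0: "(\<lambda>w. (snd w)(1 := fst w)) \<in> L \<Otimes>\<^sub>M (\<Pi>\<^sub>M i\<in>{2::nat}. L) \<rightarrow>\<^sub>M (\<Pi>\<^sub>M i\<in>{1..2}. L)"
    by (rule measurable_fun_upd[where J="{2}"]) auto
  have mf: "(\<lambda>(x, X). X(1 := x)) \<in> L \<Otimes>\<^sub>M (\<Pi>\<^sub>M i\<in>{2::nat}. L) \<rightarrow>\<^sub>M (\<Pi>\<^sub>M i\<in>{1..2}. L)"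
    using mf0 by (simp add: case_prod_beta')
  assume asm: "AE z in PiM {1..2::nat} (\<lambda>_. M \<Otimes>\<^sub>M M). d (fst (z 1)) (fst (z 2)) = d (snd (z 1)) (snd (z 2))"
  have "AE z in distr (L \<Otimes>\<^sub>M (\<Pi>\<^sub>M i\<in>{2::nat}. L)) (\<Pi>\<^sub>M i\<in>{1..2}. L) (\<lambda>(x, X). X(1 := x)).
      d (fst (z 1)) (fst (z 2)) = d (snd (z 1)) (snd (z 2))"
    unfolding eq using asm unfolding L_def .
  note AE_distrD[OF mf this]
  then have "AE w in L \<Otimes>\<^sub>M (\<Pi>\<^sub>M i\<in>{2::nat}. L). d (fst (fst w)) (fst (snd w 2)) = d (snd (fst w)) (snd (snd w 2))"
    by (rule AE_mp) (auto intro!: AE_I2 split: prod.splits)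
  then have "AE p in L. AE X in (\<Pi>\<^sub>M i\<in>{2::nat}. L). d (fst p) (fst (X 2)) = d (snd p) (snd (X 2))"
    by (rule P.AE_pair[where Q="\<lambda>w. d (fst (fst w)) (fst (snd w 2)) = d (snd (fst w)) (snd (snd w 2))", simplified])
  then obtain p where p: "AE X in (\<Pi>\<^sub>M i\<in>{2::nat}. L). d (fst p) (fst (X 2)) = d (snd p) (snd (X 2))"
    using AE_exists[OF pL] by blast
  have "AE q in distr (\<Pi>\<^sub>M i\<in>{2::nat}. L) L (\<lambda>\<omega>. \<omega> 2). d (fst p) (fst q) = d (snd p) (snd q)"
  proof (subst AE_distr_iff)
    show "{x \<in> space L. d (fst p) (fst x) = d (snd p) (snd x)} \<in> sets L"
      unfolding L_def
      by (intro borel_measurable_eq d_meas) (auto simp: space_M)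
  qed (use p in auto)
  moreover have ce: "distr (\<Pi>\<^sub>M i\<in>{2::nat}. L) L (\<lambda>\<omega>. \<omega> 2) = L"
    by (rule distr_PiM_component) (use pL in auto)
  ultimately have "AE q in L. d (fst p) (fst q) = d (snd p) (snd q)"
    by metis
  then have "AE x in M. AE y in M. d (fst p) (fst (x, y)) = d (snd p) (snd (x, y))"
    unfolding L_def by (rule pair_sigma_finite.AE_pair[OF pMM])
  then have "AE x in M. AE y in M. d (fst p) x = d (snd p) y" by simp
  then obtain x where "AE y in M. d (snd p) y = d (fst p) x"
    using AE_exists[OF prob] by (metis (mono_tags, lifting) AE_mp AE_I2)
  from const_from_one[OF this] nd show False by blast
qed




lemma aut_trans: "(\<lambda>x. x + c) \<in> Aut_md M d (rot g)"
proof -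
  have X: "(\<lambda>x. x + - c) \<in> M \<rightarrow>\<^sub>M M \<and> (AE x in M. x + c + - c = x) \<and> (AE x in M. x + - c + c = x)"
    using trans_meas[of "- c"] by simp
  have B: "\<exists>B \<in> M \<rightarrow>\<^sub>M M. (AE x in M. B (x + c) = x) \<and> (AE x in M. B x + c = x)"
    by (rule bexI[where x="\<lambda>x. x + - c"]) (use X in auto)
  have C: "AE x in M. rot g x + c = rot g (x + c)" by (simp add: rot_def algebra_simps)
  have D: "AE p in M \<Otimes>\<^sub>M M. d (fst p + c) (snd p + c) = d (fst p) (snd p)" by (simp add: tinv)
  show ?thesis unfolding Aut_md_def using trans_meas[of c] haar[of c] B C D by blast
qed

lemma aut_id: "(\<lambda>x. x) \<in> Aut_md M d (rot g)"
proof -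
  have B: "\<exists>B \<in> M \<rightarrow>\<^sub>M M. (AE x in M. B x = x) \<and> (AE x in M. B x = x)"
    by (rule bexI[where x="\<lambda>x. x"]) auto
  show ?thesis unfolding Aut_md_def using B by simp
qed

lemma part1: "coord_isomorphic M d (rot g) (graph_joining M h) (graph_joining M h')"
proof -
  have mm: "(\<lambda>(x, y). (x, y + (h' - h))) \<in> M \<Otimes>\<^sub>M M \<rightarrow>\<^sub>M M \<Otimes>\<^sub>M M"
    unfolding case_prod_beta' by (rule measurable_Pair[OF measurable_fst measurable_compose[OF measurable_snd trans_meas]])
  have eq: "graph_joining M h' = distr (graph_joining M h) (M \<Otimes>\<^sub>M M) (\<lambda>(x, y). (x, y + (h' - h)))"
    unfolding graph_joining_def
    by (subst distr_distr[OF mm graph_meas]) (rule distr_cong, simp_all add: algebra_simps)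
  show ?thesis unfolding coord_isomorphic_def
    apply (rule bexI[where x="\<lambda>x. x"])
     apply (rule bexI[where x="\<lambda>y. y + (h' - h)"])
      apply (rule eq)
     apply (rule aut_trans)
    apply (rule aut_id)
    done
qed

lemma part3:
  assumes nd: "\<not> (\<exists>c. AE p in M \<Otimes>\<^sub>M M. d (fst p) (snd p) = c)"
  shows "Phi d (rot g) 2 1 (graph_joining M h) \<noteq> Phi d (rot g) 2 1 (M \<Otimes>\<^sub>M M)"
proof
  define N where "N = (PiM (idx 2 1) (\<lambda>_. borel) \<Otimes>\<^sub>M PiM (idx 2 1) (\<lambda>_. borel) :: (((nat \<times> nat) \<times> (nat \<times> nat) \<Rightarrow> real) \<times> ((nat \<times> nat) \<times> (nat \<times> nat) \<Rightarrow> real)) measure)"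
  define e :: "(nat \<times> nat) \<times> (nat \<times> nat)" where "e = ((1,0),(2,0))"
  have e: "e \<in> idx 2 1" by (simp add: e_def idx_def)
  have Dmat_e: "Dmat d (rot g) 2 1 x e = d (x 1) (x 2)" for x :: "nat \<Rightarrow> 'a"
    using e unfolding Dmat_def e_def by simp
  have Eset: "{x \<in> space N. fst x e = snd x e} \<in> sets N"
    unfolding N_def
    by (intro borel_measurable_eq measurable_compose[OF measurable_fst measurable_component_singleton]
        measurable_compose[OF measurable_snd measurable_component_singleton] e)
  have Dm: "(\<lambda>x. (Dmat d (rot g) 2 1 x, Dmat d (rot g) 2 1 x)) \<in> PiM {1..2} (\<lambda>_. M) \<rightarrow>\<^sub>M N"
    unfolding N_def by (intro measurable_Pair Dmat_meas measurable_component_singleton) auto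
  assume eq: "Phi d (rot g) 2 1 (graph_joining M h) = Phi d (rot g) 2 1 (M \<Otimes>\<^sub>M M)"
  have "AE x in Phi d (rot g) 2 1 (graph_joining M h). fst x e = snd x e"
    unfolding Phi_graph N_def[symmetric]
    by (subst AE_distr_iff[OF Dm Eset]) simp
  then have "AE x in Phi d (rot g) 2 1 (M \<Otimes>\<^sub>M M). fst x e = snd x e" unfolding eq .
  then have "AE z in PiM {1..2} (\<lambda>_. M \<Otimes>\<^sub>M M). Dmat d (rot g) 2 1 (\<lambda>i. fst (z i)) e = Dmat d (rot g) 2 1 (\<lambda>i. snd (z i)) e"
    unfolding Phi_def N_def[symmetric]
    by (subst (asm) AE_distr_iff[OF F_meas[of 2 1, folded N_def] Eset]) simp
  then have "AE z in PiM {1..2::nat} (\<lambda>_. M \<Otimes>\<^sub>M M). d (fst (z 1)) (fst (z 2)) = d (snd (z 1)) (snd (z 2))"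
    by (rule AE_mp) (intro AE_I2 impI, metis Dmat_e)
  with nondeg[OF nd] show False by simp
qed


end

lemma setting_intro:
  fixes M :: "'a::{ab_group_add,t2_space} measure" and d :: "'a \<Rightarrow> 'a \<Rightarrow> real"
  assumes "compact_ab_topgroup TYPE('a)"
    and "haar_probability M"
    and "translation_invariant d"
    and "(\<lambda>p. d (fst p) (snd p)) \<in> borel_measurable (M \<Otimes>\<^sub>M M)"
  shows "setting M d"
proof -
  have cont: "continuous_on UNIV (\<lambda>p::'a \<times> 'a. fst p + snd p)"
    using assms(1) by (simp add: compact_ab_topgroup_def)
  have sM: "sets M = sets borel" and pM: "prob_space M" and hM: "\<And>t. distr M M (\<lambda>x. x + t) = M"
    using assms(2) by (auto simp: haar_probability_def)
  have tm: "(\<lambda>x. x + t) \<in> M \<rightarrow>\<^sub>M M" for t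
  proof -
    have "continuous_on UNIV ((\<lambda>p::'a \<times> 'a. fst p + snd p) \<circ> (\<lambda>x. (x, t)))"
      by (rule continuous_on_compose) (auto intro: continuous_intros continuous_on_subset[OF cont])
    then have "continuous_on UNIV (\<lambda>x. x + t)" by (simp add: o_def)
    then have "(\<lambda>x. x + t) \<in> borel \<rightarrow>\<^sub>M borel" by (rule borel_measurable_continuous_onI)
    then show ?thesis using measurable_cong_sets[OF sM sM] by simp
  qed
  show ?thesis
    by (rule setting.intro[OF sM pM hM tm _ assms(4)])
       (use assms(3) in \<open>simp add: translation_invariant_def\<close>)
qed

theorem proposition21:
  fixes M :: "'a::{ab_group_add,t2_space} measure"
    and d :: "'a \<Rightarrow> 'a \<Rightarrow> real"
    and g :: 'a
  assumes "compact_ab_topgroup TYPE('a)"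
    and "haar_probability M"
    and "is_metric d" and "translation_invariant d"
    and "(\<lambda>p. d (fst p) (snd p)) \<in> borel_measurable (M \<Otimes>\<^sub>M M)"
    and "ergodic_map M (rot g)"
  shows "(\<forall>h h'. coord_isomorphic M d (rot g) (graph_joining M h) (graph_joining M h'))
    \<and> (\<forall>h h' n m. n \<ge> 1 \<longrightarrow> m \<ge> 1 \<longrightarrow>
          Phi d (rot g) n m (graph_joining M h) = Phi d (rot g) n m (graph_joining M h'))
    \<and> ((\<not> (\<exists>c. AE p in M \<Otimes>\<^sub>M M. d (fst p) (snd p) = c)) \<longrightarrow>
          (\<forall>h. Phi d (rot g) 2 1 (graph_joining M h) \<noteq> Phi d (rot g) 2 1 (M \<Otimes>\<^sub>M M)))"
proof -
  interpret setting M d g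
    by (rule setting_intro[OF assms(1,2,4,5)])
  have A: "\<forall>h h'. coord_isomorphic M d (rot g) (graph_joining M h) (graph_joining M h')"
    using part1 by blast
  have B: "\<forall>h h' n m. n \<ge> 1 \<longrightarrow> m \<ge> 1 \<longrightarrow>
          Phi d (rot g) n m (graph_joining M h) = Phi d (rot g) n m (graph_joining M h')"
  proof (intro allI impI)
    fix h h' :: 'a and n m :: nat
    show "Phi d (rot g) n m (graph_joining M h) = Phi d (rot g) n m (graph_joining M h')"
      unfolding Phi_graph[of n m h] Phi_graph[of n m h'] ..
  qed
  have C: "(\<not> (\<exists>c. AE p in M \<Otimes>\<^sub>M M. d (fst p) (snd p) = c)) \<longrightarrow>
          (\<forall>h. Phi d (rot g) 2 1 (graph_joining M h) \<noteq> Phi d (rot g) 2 1 (M \<Otimes>\<^sub>M M))"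
    using part3 by blast
  show ?thesis using A B C by blast
qed

end
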